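(* Let $a>0$, $T>0$, $\beta\in(1,2)$, and let $n>1$ be an integer. Let $s_1,\dots,s_n$ and $w_1,\dots,w_n$ be the nodes and weights of the $n$-point Gauss–Jacobi quadrature on $[0,a]$ with weight function $s^{\beta-1}$. Then for every $0<t<T$, $$\left|\int_0^a e^{-ts}s^{\beta-1}\,ds-\sum_{k=1}^n w_k e^{-s_k t}\right|<2\sqrt{\pi}\,a^\beta n^{3/2}\left(\frac{e}{8}\right)^{2n}\left(\frac{aT}{n}\right)^{2n}.$$
   Context: The $n$-point Gauss–Jacobi quadrature on $[0,a]$ with weight $s^{\beta-1}$ is the rule $\int_0^a \phi(s)s^{\beta-1}\,ds\approx\sum_{k=1}^n w_k\phi(s_k)$ that is exact for all polynomials $\phi$ of degree at most $2n-1$. *)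

theory Defs
  imports "HOL-Analysis.Analysis" "HOL-Computational_Algebra.Polynomial"
begin

text \<open>The n-point Gauss--Jacobi quadrature on [0,a] with weight s^(beta-1):
  nodes s 1, ..., s n and weights w 1, ..., w n such that the rule is exact
  for all real polynomials of degree at most 2n-1.  (Such a rule is unique.)\<close>
definition gauss_jacobi_rule ::
  "real \<Rightarrow> real \<Rightarrow> nat \<Rightarrow> (nat \<Rightarrow> real) \<Rightarrow> (nat \<Rightarrow> real) \<Rightarrow> bool" where
  "gauss_jacobi_rule a \<beta> n s w \<longleftrightarrow>
     (\<forall>p :: real poly. degree p \<le> 2 * n - 1 \<longrightarrow>
        integral {0..a} (\<lambda>x. poly p x * x powr (\<beta> - 1))
          = (\<Sum>k = 1..n. w k * poly p (s k)))"

end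

theory Submission
  imports Defs
begin


lemma rolle_step:
  fixes g g' :: "real \<Rightarrow> real"
  assumes der: "\<And>y. (g has_real_derivative g' y) (at y)"
  shows "finite Z \<Longrightarrow> card Z = Suc k \<Longrightarrow> (\<forall>z\<in>Z. g z = 0) \<Longrightarrow>
    \<exists>Z'. finite Z' \<and> card Z' = k \<and> Z' \<subseteq> {Min Z..Max Z} \<and> (\<forall>z\<in>Z'. g' z = 0)"
proof (induction k arbitrary: Z)
  case 0
  then show ?case by auto
next
  case (Suc k)
  define z0 where "z0 = Min Z"
  define Z1 where "Z1 = Z - {z0}"
  have ne: "Z \<noteq> {}" using Suc by auto
  have z0Z: "z0 \<in> Z" using Suc ne z0_def by simp
  have fZ1: "finite Z1" and cZ1: "card Z1 = Suc k" using Suc z0Z by (auto simp: Z1_def)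
  have Z1ne: "Z1 \<noteq> {}" using cZ1 by auto
  have z1: "\<forall>z\<in>Z1. g z = 0" using Suc by (auto simp: Z1_def)
  obtain Z1' where Z1': "finite Z1'" "card Z1' = k" "Z1' \<subseteq> {Min Z1..Max Z1}" "\<forall>z\<in>Z1'. g' z = 0"
    using Suc.IH[OF fZ1 cZ1 z1] by blast
  define z1 where "z1 = Min Z1"
  have z1Z1: "z1 \<in> Z1" using fZ1 Z1ne z1_def by simp
  have lt: "z0 < z1"
  proof -
    have "z0 \<le> z1" using z1Z1 Suc.prems(1) by (auto simp: z0_def Z1_def)
    moreover have "z1 \<noteq> z0" using z1Z1 by (auto simp: Z1_def)
    ultimately show ?thesis by simp
  qed
  have cont: "continuous_on {z0..z1} g"
    using der by (meson DERIV_isCont continuous_at_imp_continuous_on)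
  have "g z0 = g z1" using Suc.prems z0Z z1Z1 by (auto simp: Z1_def)
  then obtain \<zeta> where \<zeta>: "z0 < \<zeta>" "\<zeta> < z1" "DERIV g \<zeta> :> 0"
    using Rolle[OF lt _ cont] der real_differentiable_def by blast
  have g'z: "g' \<zeta> = 0" using DERIV_unique[OF der \<zeta>(3)] .
  have notin: "\<zeta> \<notin> Z1'" using Z1' \<zeta>(2) z1_def by auto
  have sub1: "{Min Z1..Max Z1} \<subseteq> {Min Z..Max Z}"
    using Suc.prems(1) fZ1 Z1ne by (auto simp: Z1_def intro: Min_antimono Max_mono)
  have "\<zeta> \<in> {Min Z..Max Z}"
  proof -
    have "z1 \<le> Max Z" using z1Z1 Suc.prems(1) by (auto simp: Z1_def)
    then show ?thesis using \<zeta> z0_def by auto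
  qed
  then show ?case using Z1' notin g'z sub1
    by (intro exI[of _ "insert \<zeta> Z1'"]) auto
qed

lemma gen_rolle:
  fixes G :: "nat \<Rightarrow> real \<Rightarrow> real"
  shows "(\<forall>k<m. \<forall>y. (G k has_real_derivative G (Suc k) y) (at y)) \<Longrightarrow> finite Z \<Longrightarrow>
    card Z = Suc m \<Longrightarrow> Z \<subseteq> {lo..hi} \<Longrightarrow> (\<forall>z\<in>Z. G 0 z = 0) \<Longrightarrow> \<exists>\<xi>\<in>{lo..hi}. G m \<xi> = 0"
proof (induction m arbitrary: G Z)
  case 0
  then obtain z where "Z = {z}" using card_1_singletonE[of Z] by auto
  then show ?case using 0 by auto
next
  case (Suc m)
  have der: "\<And>y. (G 0 has_real_derivative G 1 y) (at y)" using Suc.prems(1) by auto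
  obtain Z' where Z': "finite Z'" "card Z' = Suc m" "Z' \<subseteq> {Min Z..Max Z}" "\<forall>z\<in>Z'. G 1 z = 0"
    using rolle_step[OF der Suc.prems(2,3,5)] by blast
  have ne: "Z \<noteq> {}" using Suc.prems(3) by auto
  have "{Min Z..Max Z} \<subseteq> {lo..hi}" using Suc.prems(2,4) ne by auto
  with Z' have sub: "Z' \<subseteq> {lo..hi}" by blast
  have "\<exists>\<xi>\<in>{lo..hi}. (\<lambda>k. G (Suc k)) m \<xi> = 0"
    by (rule Suc.IH) (use Suc.prems(1) Z' sub in auto)
  then show ?case by simp
qed

lemma pderiv_iter:
  fixes q :: "real poly"
  shows "degree q \<le> k \<Longrightarrow> (pderiv ^^ k) q = [:coeff q k * fact k:]"
proof (induction k arbitrary: q)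
  case 0
  then show ?case by (metis funpow_0 degree_0_id fact_0 le_0_eq mult.right_neutral)
next
  case (Suc k)
  have "degree (pderiv q) \<le> k" using Suc.prems by (simp add: degree_pderiv)
  then have "(pderiv ^^ k) (pderiv q) = [:coeff (pderiv q) k * fact k:]" by (rule Suc.IH)
  then show ?case by (simp add: funpow_Suc_right coeff_pderiv algebra_simps del: funpow.simps)
qed

lemma lagrange_exists:
  fixes f :: "real \<Rightarrow> real"
  shows "finite X \<Longrightarrow> \<exists>p. degree p \<le> card X - 1 \<and> (\<forall>x\<in>X. poly p x = f x)"
proof (induction X rule: finite_induct)
  case empty
  then show ?case by (intro exI[of _ 0]) auto
next
  case (insert x X)
  then obtain p where p: "degree p \<le> card X - 1" "\<forall>y\<in>X. poly p y = f y" by blast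
  define Q where "Q = (\<Prod>y\<in>X. [:-y, 1:])"
  have degQ: "degree Q \<le> card X"
    using degree_prod_sum_le[OF insert(1), of "\<lambda>y. [:-y,1:]"] by (simp add: Q_def)
  have pQ: "poly Q z = (\<Prod>y\<in>X. z - y)" for z by (simp add: Q_def poly_prod)
  have Qx: "poly Q x \<noteq> 0" using insert(1,2) by (simp add: pQ)
  have Qy: "\<forall>y\<in>X. poly Q y = 0" using insert(1) by (auto simp: pQ)
  define c where "c = (f x - poly p x) / poly Q x"
  define p' where "p' = p + smult c Q"
  have "degree p' \<le> card X"
    unfolding p'_def using p(1) degQ
    by (meson degree_add_le degree_smult_le le_diff_conv order.trans le_add1)
  moreover have "\<forall>y\<in>insert x X. poly p' y = f y"
    using p(2) Qy Qx by (auto simp: p'_def c_def)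
  ultimately show ?case using insert by auto
qed



fun cheb :: "real \<Rightarrow> nat \<Rightarrow> real poly" where
  "cheb a 0 = 1"
| "cheb a (Suc 0) = [:-1, 2/a:]"
| "cheb a (Suc (Suc k)) = smult 2 ([:-1, 2/a:] * cheb a (Suc k)) - cheb a k"

lemma cheb_cos:
  shows "a \<noteq> 0 \<Longrightarrow> poly (cheb a k) (a * (1 + cos \<theta>) / 2) = cos (real k * \<theta>)"
proof (induction a k rule: cheb.induct)
  case (1 a)
  then show ?case by simp
next
  case (2 a)
  then show ?case by (simp add: field_simps)
next
  case (3 a k)
  have e: "cos (real (Suc (Suc k)) * \<theta>) = 2 * cos \<theta> * cos (real (Suc k) * \<theta>) - cos (real k * \<theta>)"
  proof -
    have "cos (real (Suc (Suc k)) * \<theta>) = cos (real (Suc k) * \<theta> + \<theta>)" by (simp add: algebra_simps)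
    moreover have "cos (real k * \<theta>) = cos (real (Suc k) * \<theta> - \<theta>)" by (simp add: algebra_simps)
    ultimately show ?thesis by (simp add: cos_add cos_diff)
  qed
  show ?case using 3 e by (simp add: field_simps)
qed

definition chebc :: "real \<Rightarrow> nat \<Rightarrow> real" where
  "chebc a k = (if k = 0 then 1 else 2 ^ (k - 1) * (2 / a) ^ k)"

lemma cheb_deg:
  shows "a \<noteq> 0 \<Longrightarrow> degree (cheb a k) = k \<and> coeff (cheb a k) k = chebc a k"
proof (induction a k rule: cheb.induct)
  case (1 a)
  then show ?case by (simp add: chebc_def)
next
  case (2 a)
  then show ?case by (simp add: chebc_def)
next
  case (3 a k)
  note assms = 3(3)
  have IH1: "degree (cheb a (Suc k)) = Suc k \<and> coeff (cheb a (Suc k)) (Suc k) = chebc a (Suc k)" using 3 by blast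
  have IH0: "degree (cheb a k) = k \<and> coeff (cheb a k) k = chebc a k" using 3 by blast
  define A where "A = smult 2 ([:-1, 2/a:] * cheb a (Suc k))"
  have d1: "degree [:-1, 2/a:] = 1" using assms by simp
  have dA: "degree A \<le> Suc (Suc k)" unfolding A_def
    using degree_mult_le[of "[:-1, 2/a:]" "cheb a (Suc k)"] IH1 d1 by simp
  have cA: "coeff A (Suc (Suc k)) = 2 * (2/a) * chebc a (Suc k)"
    unfolding A_def using coeff_mult_degree_sum[of "[:-1, 2/a:]" "cheb a (Suc k)"] IH1 d1 by simp
  have c: "coeff (cheb a (Suc (Suc k))) (Suc (Suc k)) = chebc a (Suc (Suc k))"
  proof -
    have "coeff (cheb a (Suc (Suc k))) (Suc (Suc k)) = coeff A (Suc (Suc k)) - coeff (cheb a k) (Suc (Suc k))"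
      unfolding cheb.simps A_def[symmetric] coeff_diff ..
    also have "coeff (cheb a k) (Suc (Suc k)) = 0" using IH0 by (simp add: coeff_eq_0)
    finally show ?thesis using cA by (simp add: chebc_def)
  qed
  have nz: "chebc a (Suc (Suc k)) \<noteq> 0" using assms by (simp add: chebc_def)
  have "degree (cheb a (Suc (Suc k))) \<le> Suc (Suc k)"
    using dA IH0 unfolding cheb.simps A_def[symmetric] by (simp add: degree_diff_le)
  moreover have "Suc (Suc k) \<le> degree (cheb a (Suc (Suc k)))" using c nz le_degree by metis
  ultimately have "degree (cheb a (Suc (Suc k))) = Suc (Suc k)" by (rule antisym)
  then show ?case using c by blast
qed



lemma approx_exp:
  fixes a t :: real and m :: nat
  assumes a: "a > 0" and t: "t \<ge> 0" and m: "m \<ge> 1"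
  shows "\<exists>p. degree p \<le> m - 1 \<and> (\<forall>x\<in>{0..a}. \<bar>exp (- t * x) - poly p x\<bar> \<le> 2 * (a * t / 4) ^ m / fact m)"
proof -
  define u where "u j = (2 * real j + 1) * pi / (2 * real m)" for j :: nat
  define nd where "nd j = a * (1 + cos (u j)) / 2" for j
  define X where "X = nd ` {..<m}"
  have u_rng: "0 \<le> u j \<and> u j \<le> pi" if "j < m" for j
  proof -
    have "2 * real j + 1 \<le> 2 * real m" using that by linarith
    then have "(2 * real j + 1) * pi \<le> (2 * real m) * pi" by (simp add: mult_right_mono)
    then show ?thesis using m by (simp add: u_def divide_le_eq)
  qed
  have inj: "inj_on nd {..<m}"
  proof (rule inj_onI)
    fix i j assume ij: "i \<in> {..<m}" "j \<in> {..<m}" "nd i = nd j"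
    then have "cos (u i) = cos (u j)" using a by (simp add: nd_def)
    then have "u i = u j" using cos_inj_pi u_rng ij by auto
    then show "i = j" using m by (simp add: u_def)
  qed
  have fX: "finite X" and cX: "card X = m" using inj by (auto simp: X_def card_image)
  have Xsub: "X \<subseteq> {0..a}"
  proof
    fix x assume "x \<in> X"
    then obtain j where "x = nd j" by (auto simp: X_def)
    moreover have "-1 \<le> cos (u j)" "cos (u j) \<le> 1" by auto
    moreover have "0 \<le> a * (1 + cos (u j))" using a abs_cos_le_one[of "u j"] by (smt (verit) mult_nonneg_nonneg)
    moreover have "a * (1 + cos (u j)) \<le> a * 2" using a \<open>cos (u j) \<le> 1\<close> by (intro mult_left_mono) auto
    moreover have "x * 2 = a * (1 + cos (u j))" using \<open>x = nd j\<close> by (simp add: nd_def)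
    ultimately show "x \<in> {0..a}" by simp
  qed
  obtain p where p: "degree p \<le> card X - 1" "\<forall>x\<in>X. poly p x = exp (- t * x)"
    using lagrange_exists[OF fX, of "\<lambda>x. exp (- t * x)"] by blast
  define \<omega> where "\<omega> = cheb a m"
  define L where "L = chebc a m"
  have degw: "degree \<omega> = m" and cw: "coeff \<omega> m = L"
    using cheb_deg[of a m] a by (auto simp: \<omega>_def L_def)
  have Lpos: "L > 0" using a by (simp add: L_def chebc_def)
  have wnz: "\<omega> \<noteq> 0" using degw m by auto
  have wX: "\<forall>x\<in>X. poly \<omega> x = 0"
  proof
    fix x assume "x \<in> X"
    then obtain j where j: "x = nd j" "j < m" by (auto simp: X_def)
    have "poly \<omega> x = cos (real m * u j)" using cheb_cos[of a m "u j"] a by (simp add: j \<omega>_def nd_def)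
    also have "real m * u j = real_of_int (int (2 * j + 1)) * (pi / 2)" using m by (simp add: u_def field_simps)
    also have "cos \<dots> = 0" by (subst cos_zero_iff_int) (auto intro!: exI[of _ "int (2*j+1)"])
    finally show "poly \<omega> x = 0" .
  qed
  have wb: "\<bar>poly \<omega> x\<bar> \<le> 1" if "x \<in> {0..a}" for x
  proof -
    define y where "y = 2 * x / a - 1"
    have y: "-1 \<le> y" "y \<le> 1" using that a by (auto simp: y_def field_simps)
    have xe: "x = a * (1 + cos (arccos y)) / 2" using y a by (simp add: cos_arccos y_def field_simps)
    have "poly \<omega> x = cos (real m * arccos y)" unfolding \<omega>_def
      by (subst xe, rule cheb_cos) (use a in simp)
    then show ?thesis by simp
  qed
  define B where "B = 2 * (a * t / 4) ^ m / fact m"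
  have BL: "t ^ m / (L * fact m) = B"
  proof -
    obtain k where k: "m = Suc k" using m by (cases m) auto
    have "L = 2 ^ k * (2 / a) ^ Suc k" using k by (simp add: L_def chebc_def)
    moreover have "(4::real) ^ k = 2 ^ k * 2 ^ k" by (simp flip: power_mult_distrib)
    ultimately have "L = (4 / a) ^ m / 2" using k by (simp add: power_divide)
    then have "L * (2 * a ^ m) = 4 ^ m" using a by (simp add: power_divide)
    then show ?thesis using a Lpos by (simp add: B_def power_divide power_mult_distrib field_simps)
  qed
  have main: "\<bar>exp (- t * x) - poly p x\<bar> \<le> B" if x: "x \<in> {0..a}" for x
  proof (cases "x \<in> X")
    case True
    then show ?thesis using p a t by (simp add: B_def)
  next
    case False
    have wx: "poly \<omega> x \<noteq> 0"
    proof
      assume "poly \<omega> x = 0"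
      then have "insert x X \<subseteq> {y. poly \<omega> y = 0}" using wX by auto
      then have "card (insert x X) \<le> card {y. poly \<omega> y = 0}"
        using poly_roots_finite[OF wnz] by (rule card_mono[rotated])
      also have "\<dots> \<le> m" using card_poly_roots_bound[OF wnz] degw by simp
      finally show False using False fX cX by simp
    qed
    define K where "K = (exp (- t * x) - poly p x) / poly \<omega> x"
    define G where "G k y = (- t) ^ k * exp (- t * y) - poly ((pderiv ^^ k) p) y - K * poly ((pderiv ^^ k) \<omega>) y" for k y
    have der: "\<forall>k<m. \<forall>y. (G k has_real_derivative G (Suc k) y) (at y)"
    proof (intro allI impI)
      fix k y
      have d1: "((\<lambda>y. (- t) ^ k * exp (- t * y)) has_real_derivative (- t) ^ Suc k * exp (- t * y)) (at y)"
        by (auto intro!: derivative_eq_intros)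
      have d2: "((\<lambda>y. poly ((pderiv ^^ k) p) y) has_real_derivative poly ((pderiv ^^ Suc k) p) y) (at y)"
        using poly_DERIV[of "(pderiv ^^ k) p" y] by simp
      have d3: "((\<lambda>y. K * poly ((pderiv ^^ k) \<omega>) y) has_real_derivative K * poly ((pderiv ^^ Suc k) \<omega>) y) (at y)"
        using DERIV_cmult[OF poly_DERIV[of "(pderiv ^^ k) \<omega>" y], of K] by simp
      have "((\<lambda>y. G k y) has_real_derivative G (Suc k) y) (at y)"
        unfolding G_def by (rule DERIV_diff[OF DERIV_diff[OF d1 d2] d3])
      then show "(G k has_real_derivative G (Suc k) y) (at y)" by simp
    qed
    have G0: "\<forall>z\<in>insert x X. G 0 z = 0"
      using p(2) wX wx by (auto simp: G_def K_def)
    obtain \<xi> where \<xi>: "\<xi> \<in> {0..a}" "G m \<xi> = 0"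
      using gen_rolle[OF der _ _ _ G0, of 0 a] fX cX False Xsub x by auto
    have "(pderiv ^^ m) p = [:coeff p m * fact m:]" using p(1) cX by (intro pderiv_iter) simp
    also have "coeff p m = 0" using p(1) cX m by (intro coeff_eq_0) simp
    finally have dp: "(pderiv ^^ m) p = 0" by simp
    have dw: "(pderiv ^^ m) \<omega> = [:L * fact m:]" using pderiv_iter[of \<omega> m] degw cw by simp
    have eq: "(- t) ^ m * exp (- t * \<xi>) = K * L * fact m" using \<xi>(2) by (simp add: G_def dp dw)
    have "\<bar>K\<bar> * (L * fact m) = t ^ m * exp (- t * \<xi>)"
    proof -
      have "\<bar>K * L * fact m\<bar> = \<bar>K\<bar> * (L * fact m)" using Lpos by (simp add: abs_mult)
      moreover have "\<bar>(- t) ^ m * exp (- t * \<xi>)\<bar> = t ^ m * exp (- t * \<xi>)" using t by (simp add: abs_mult power_abs)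
      ultimately show ?thesis using eq by simp
    qed
    also have "\<dots> \<le> t ^ m"
    proof -
      have "exp (- t * \<xi>) \<le> 1" using t \<xi>(1) by (simp add: mult_nonneg_nonneg)
      then show ?thesis using t by (simp add: mult_left_le)
    qed
    finally have "\<bar>K\<bar> \<le> t ^ m / (L * fact m)" using Lpos by (simp add: field_simps)
    moreover have "\<bar>exp (- t * x) - poly p x\<bar> = \<bar>K\<bar> * \<bar>poly \<omega> x\<bar>" using wx by (simp add: K_def abs_divide)
    moreover have "\<bar>K\<bar> * \<bar>poly \<omega> x\<bar> \<le> \<bar>K\<bar>" using wb[OF x] by (simp add: mult_left_le)
    ultimately show ?thesis using BL by simp
  qed
  show ?thesis using p(1) cX main by (auto simp: B_def)
qed



lemma wt_cont:
  fixes a \<beta> :: real assumes "\<beta> > 1"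
  shows "continuous_on {0..a} (\<lambda>x. x powr (\<beta> - 1))"
  using assms by (intro continuous_on_powr') (auto intro: continuous_intros)

lemma int_pos:
  fixes a \<beta> :: real and q :: "real poly"
  assumes a: "a > 0" and b: "\<beta> > 1" and q: "q \<noteq> 0" and nn: "\<forall>x\<in>{0..a}. 0 \<le> poly q x"
  shows "0 < integral {0..a} (\<lambda>x. poly q x * x powr (\<beta> - 1))"
proof -
  have c: "continuous_on {0..a} (\<lambda>x. poly q x * x powr (\<beta> - 1))"
    by (rule continuous_on_mult[OF _ wt_cont[OF b]]) (auto intro: continuous_intros)
  have h: "\<And>x. x \<in> {0..a} \<Longrightarrow> 0 \<le> poly q x * x powr (\<beta> - 1)" using nn by auto
  have ge: "0 \<le> integral {0..a} (\<lambda>x. poly q x * x powr (\<beta> - 1))"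
    using h integrable_continuous_interval[OF c] by (intro integral_nonneg) auto
  have "integral {0..a} (\<lambda>x. poly q x * x powr (\<beta> - 1)) \<noteq> 0"
  proof
    assume "integral {0..a} (\<lambda>x. poly q x * x powr (\<beta> - 1)) = 0"
    then have z: "\<forall>x\<in>{0..a}. poly q x * x powr (\<beta> - 1) = 0"
      using integral_eq_0_iff[OF c a h] by blast
    have "{0<..a} \<subseteq> {x. poly q x = 0}" using z by auto
    then have "finite {0<..a}" using poly_roots_finite[OF q] finite_subset by blast
    then show False using infinite_Ioc[OF a] by blast
  qed
  then show ?thesis using ge by simp
qed

definition QQ :: "nat \<Rightarrow> (nat \<Rightarrow> real) \<Rightarrow> nat \<Rightarrow> real poly" where
  "QQ n s k = (\<Prod>j\<in>{1..n} - {k}. [:- s j, 1:] ^ 2)"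

lemma QQ_props:
  assumes k: "k \<in> {1..n}"
  shows "degree (QQ n s k) \<le> 2 * (n - 1)" "QQ n s k \<noteq> 0" "\<And>x. 0 \<le> poly (QQ n s k) x"
    "\<And>i. i \<in> {1..n} \<Longrightarrow> i \<noteq> k \<Longrightarrow> poly (QQ n s k) (s i) = 0"
proof -
  have "degree (QQ n s k) \<le> (\<Sum>j\<in>{1..n} - {k}. degree ([:- s j, 1:] ^ 2))"
    unfolding QQ_def using degree_prod_sum_le[of "{1..n} - {k}" "\<lambda>j. [:- s j, 1:] ^ 2"] by (simp add: o_def)
  also have "\<dots> \<le> (\<Sum>j\<in>{1..n} - {k}. 2)"
    by (intro sum_mono) (metis degree_power_le degree_pCons_eq_if degree_0 mult.commute One_nat_def one_neq_zero pCons_eq_0_iff order_trans le_refl nat_mult_1_right)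
  also have "\<dots> = 2 * (n - 1)" using k by (simp add: card_Diff_singleton)
  finally show "degree (QQ n s k) \<le> 2 * (n - 1)" .
  show "QQ n s k \<noteq> 0" unfolding QQ_def by (simp add: prod_zero_iff)
  show "\<And>x. 0 \<le> poly (QQ n s k) x" unfolding QQ_def poly_prod by (intro prod_nonneg) simp
  show "\<And>i. i \<in> {1..n} \<Longrightarrow> i \<noteq> k \<Longrightarrow> poly (QQ n s k) (s i) = 0"
    unfolding QQ_def poly_prod by (rule prod_zero) auto
qed



lemma sum_single:
  fixes f :: "nat \<Rightarrow> real"
  assumes "k \<in> {1..n}" "\<And>i. i \<in> {1..n} \<Longrightarrow> i \<noteq> k \<Longrightarrow> f i = 0"
  shows "(\<Sum>i = 1..n. f i) = f k"
proof -
  have "(\<Sum>i = 1..n. f i) = f k + (\<Sum>i\<in>{1..n} - {k}. f i)"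
    using assms(1) by (simp add: sum.remove)
  also have "(\<Sum>i\<in>{1..n} - {k}. f i) = 0" using assms(2) by (intro sum.neutral) auto
  finally show ?thesis by simp
qed

lemma gauss_props:
  fixes a \<beta> :: real
  assumes a: "a > 0" and b: "\<beta> > 1" and n: "n \<ge> 1" and G: "gauss_jacobi_rule a \<beta> n s w"
    and k: "k \<in> {1..n}"
  shows "s k \<in> {0..a}" "w k > 0"
proof -
  have ex: "integral {0..a} (\<lambda>x. poly q x * x powr (\<beta> - 1)) = (\<Sum>i = 1..n. w i * poly q (s i))"
    if "degree q \<le> 2 * n - 1" for q using G that unfolding gauss_jacobi_rule_def by blast
  note Q = QQ_props[OF k, where s = s]
  have dQ: "degree (QQ n s k) \<le> 2 * n - 1" using Q(1) n by simp
  have d1: "degree (c * QQ n s k) \<le> 2 * n - 1" if "degree c \<le> 1" for c :: "real poly"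
    using degree_mult_le[of c "QQ n s k"] that Q(1) n by simp
  have van: "(\<Sum>i = 1..n. w i * poly (c * QQ n s k) (s i)) = 0" if "poly c (s k) = 0" for c
    using sum_single[OF k, of "\<lambda>i. w i * poly (c * QQ n s k) (s i)"] Q(4) that by simp
  show "s k \<in> {0..a}"
  proof (rule ccontr)
    assume "s k \<notin> {0..a}"
    then consider "s k < 0" | "s k > a" by force
    then obtain c :: "real poly" where c: "degree c \<le> 1" "c \<noteq> 0" "poly c (s k) = 0" "\<forall>x\<in>{0..a}. 0 \<le> poly c x"
    proof cases
      case 1
      then show ?thesis by (intro that[of "[:- s k, 1:]"]) auto
    next
      case 2
      then show ?thesis by (intro that[of "[:s k, -1:]"]) auto
    qed
    have "0 < integral {0..a} (\<lambda>x. poly (c * QQ n s k) x * x powr (\<beta> - 1))"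
      using c Q(2,3) by (intro int_pos[OF a b]) auto
    also have "\<dots> = 0" using ex[OF d1[OF c(1)]] van[OF c(3)] by simp
    finally show False by simp
  qed
  have "0 < integral {0..a} (\<lambda>x. poly (QQ n s k) x * x powr (\<beta> - 1))"
    using Q(2,3) by (intro int_pos[OF a b]) auto
  also have "\<dots> = w k * poly (QQ n s k) (s k)"
    using ex[OF dQ] sum_single[OF k, of "\<lambda>i. w i * poly (QQ n s k) (s i)"] Q(4) by simp
  finally show "w k > 0" using Q(3)[of "s k"] by (metis mult_nonpos_nonneg not_less)
qed



lemma pow_fact_le_exp:
  fixes x :: real assumes "x \<ge> 0"
  shows "x ^ m / fact m \<le> exp x"
proof -
  have s: "summable (\<lambda>n. x ^ n / fact n)" using exp_converges[of x] by (simp add: sums_iff divide_inverse mult.commute)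
  have "exp x = (\<Sum>n. x ^ n / fact n)" by (simp add: exp_def divide_inverse mult.commute)
  moreover have "(\<Sum>n\<in>{m}. x ^ n / fact n) \<le> (\<Sum>n. x ^ n / fact n)"
    using assms by (intro sum_le_suminf[OF s]) auto
  ultimately show ?thesis by simp
qed


lemma numeric:
  fixes a T t \<beta> E :: real and n :: nat
  assumes a: "a > 0" and T: "T > 0" and t: "0 < t" "t < T" and n: "n > 1"
    and err: "E \<le> 4 * a powr \<beta> * (a * t / 4) ^ (2 * n) / fact (2 * n)"
  shows "E < 2 * sqrt pi * a powr \<beta> * real n powr (3/2) * (exp 1 / 8) ^ (2 * n)
             * (a * T / real n) ^ (2 * n)"
proof -
  have n1: "n \<ge> 1" using n by simp
  define N where "N = real (2 * n)"
  have Npos: "N > 0" using n1 by (simp add: N_def)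
  have lt: "(a * t / 4) ^ (2 * n) < (a * T / 4) ^ (2 * n)"
    using a t n1 by (intro power_strict_mono) auto
  have fb: "N ^ (2 * n) / fact (2 * n) \<le> exp N" using pow_fact_le_exp[of N "2 * n"] Npos by simp
  have "1 / fact (2 * n) \<le> (exp 1 / N) ^ (2 * n)"
  proof -
    have "exp N = exp 1 ^ (2 * n)" by (simp add: N_def flip: exp_of_nat_mult)
    with fb have "N ^ (2 * n) / fact (2 * n) \<le> exp 1 ^ (2 * n)" by simp
    then show ?thesis using Npos by (simp add: power_divide field_simps)
  qed
  then have "(a * T / 4) ^ (2 * n) * (1 / fact (2 * n)) \<le> (a * T / 4) ^ (2 * n) * (exp 1 / N) ^ (2 * n)"
    by (rule mult_left_mono) (use a T in simp)
  then have "(a * T / 4) ^ (2 * n) / fact (2 * n) \<le> (a * T / 4) ^ (2 * n) * (exp 1 / N) ^ (2 * n)"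
    by simp
  also have "(a * T / 4) ^ (2 * n) * (exp 1 / N) ^ (2 * n) = ((a * T / 4) * (exp 1 / N)) ^ (2 * n)"
    by (rule power_mult_distrib[symmetric])
  also have "(a * T / 4) * (exp 1 / N) = (exp 1 / 8) * (a * T / real n)"
    using n1 by (simp add: N_def field_simps)
  also have "((exp 1 / 8) * (a * T / real n)) ^ (2 * n) = (exp 1 / 8) ^ (2 * n) * (a * T / real n) ^ (2 * n)"
    by (rule power_mult_distrib)
  finally have fin1: "(a * T / 4) ^ (2 * n) / fact (2 * n) \<le> (exp 1 / 8) ^ (2 * n) * (a * T / real n) ^ (2 * n)" .
  have c4: "4 \<le> 2 * sqrt pi * real n powr (3/2)"
  proof -
    have h1: "1 \<le> sqrt pi" using pi_gt3 by simp
    have "real n powr 1 \<le> real n powr (3/2)" using n1 by (intro powr_mono) auto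
    then have h2: "2 \<le> real n powr (3/2)" using n by simp
    have "1 * 2 \<le> sqrt pi * real n powr (3/2)" by (rule mult_mono) (use h1 h2 in auto)
    then show ?thesis by simp
  qed
  have apos: "a powr \<beta> > 0" using a by simp
  have "4 * a powr \<beta> * (a * t / 4) ^ (2 * n) < 4 * a powr \<beta> * (a * T / 4) ^ (2 * n)"
    using lt apos by simp
  then have "4 * a powr \<beta> * (a * t / 4) ^ (2 * n) / fact (2 * n) < 4 * a powr \<beta> * (a * T / 4) ^ (2 * n) / fact (2 * n)"
    by (rule divide_strict_right_mono) simp
  then have "E < 4 * a powr \<beta> * (a * T / 4) ^ (2 * n) / fact (2 * n)"
    using err by linarith
  also have "\<dots> = 4 * a powr \<beta> * ((a * T / 4) ^ (2 * n) / fact (2 * n))" by simp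
  also have "\<dots> \<le> 4 * a powr \<beta> * ((exp 1 / 8) ^ (2 * n) * (a * T / real n) ^ (2 * n))"
    by (rule mult_left_mono[OF fin1]) (use apos in simp)
  also have "\<dots> \<le> (2 * sqrt pi * real n powr (3/2)) * a powr \<beta> * ((exp 1 / 8) ^ (2 * n) * (a * T / real n) ^ (2 * n))"
    by (rule mult_right_mono[OF mult_right_mono[OF c4]]) (use apos a T in auto)
  also have "\<dots> = 2 * sqrt pi * a powr \<beta> * real n powr (3/2) * (exp 1 / 8) ^ (2 * n) * (a * T / real n) ^ (2 * n)"
    by (simp only: mult_ac)
  finally show ?thesis .
qed

theorem lemma2p4:
  fixes a T \<beta> t :: real and n :: nat and s w :: "nat \<Rightarrow> real"
  assumes "a > 0" and "T > 0" and "1 < \<beta>" and "\<beta> < 2" and "n > 1"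
    and "gauss_jacobi_rule a \<beta> n s w"
    and "0 < t" and "t < T"
  shows "\<bar>integral {0..a} (\<lambda>x. exp (- t * x) * x powr (\<beta> - 1))
           - (\<Sum>k = 1..n. w k * exp (- s k * t))\<bar>
         < 2 * sqrt pi * a powr \<beta> * real n powr (3/2) * (exp 1 / 8) ^ (2 * n)
             * (a * T / real n) ^ (2 * n)"
proof -
  note a = assms(1) and b = assms(3) and G = assms(6)
  have n1: "n \<ge> 1" using assms(5) by simp
  define \<rho> where "\<rho> x = x powr (\<beta> - 1)" for x :: real
  define B where "B = 2 * (a * t / 4) ^ (2 * n) / fact (2 * n)"
  obtain p where p: "degree p \<le> 2 * n - 1" "\<forall>x\<in>{0..a}. \<bar>exp (- t * x) - poly p x\<bar> \<le> B"
    using approx_exp[OF a, of t "2 * n"] assms(7) n1 unfolding B_def by auto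
  have ex: "integral {0..a} (\<lambda>x. poly q x * \<rho> x) = (\<Sum>i = 1..n. w i * poly q (s i))"
    if "degree q \<le> 2 * n - 1" for q using G that unfolding gauss_jacobi_rule_def \<rho>_def by blast
  have sk: "\<And>k. k \<in> {1..n} \<Longrightarrow> s k \<in> {0..a} \<and> w k > 0"
    using gauss_props[OF a b n1 G] by blast
  define J where "J = integral {0..a} \<rho>"
  have sw: "(\<Sum>i = 1..n. w i) = J" using ex[of 1] by (simp add: J_def)
  have crho: "continuous_on {0..a} \<rho>" unfolding \<rho>_def by (rule wt_cont[OF b])
  have rho_nn: "\<And>x. 0 \<le> \<rho> x" by (simp add: \<rho>_def)
  define f where "f x = exp (- t * x)" for x
  have cf: "continuous_on {0..a} f" unfolding f_def by (intro continuous_intros)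
  have if1: "(\<lambda>x. f x * \<rho> x) integrable_on {0..a}"
    by (intro integrable_continuous_interval continuous_on_mult crho cf)
  have if2: "(\<lambda>x. poly p x * \<rho> x) integrable_on {0..a}"
    by (intro integrable_continuous_interval continuous_on_mult crho) (auto intro: continuous_intros)
  have irho: "\<rho> integrable_on {0..a}" using crho integrable_continuous_interval by blast
  have split: "integral {0..a} (\<lambda>x. f x * \<rho> x) - (\<Sum>k = 1..n. w k * f (s k))
      = integral {0..a} (\<lambda>x. (f x - poly p x) * \<rho> x) - (\<Sum>k = 1..n. w k * (f (s k) - poly p (s k)))"
  proof -
    have "integral {0..a} (\<lambda>x. (f x - poly p x) * \<rho> x)
        = integral {0..a} (\<lambda>x. f x * \<rho> x) - integral {0..a} (\<lambda>x. poly p x * \<rho> x)"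
      using integral_diff[OF if1 if2] by (simp add: algebra_simps)
    moreover have "(\<Sum>k = 1..n. w k * (f (s k) - poly p (s k))) = (\<Sum>k = 1..n. w k * f (s k)) - (\<Sum>i = 1..n. w i * poly p (s i))"
      by (simp add: algebra_simps sum_subtractf)
    ultimately show ?thesis using ex[OF p(1)] by simp
  qed
  have e1: "\<bar>integral {0..a} (\<lambda>x. (f x - poly p x) * \<rho> x)\<bar> \<le> B * J"
  proof -
    have i3: "(\<lambda>x. (f x - poly p x) * \<rho> x) integrable_on {0..a}"
      using integrable_diff[OF if1 if2] by (simp add: algebra_simps)
    have i4: "(\<lambda>x. B * \<rho> x) integrable_on {0..a}" using integrable_cmul[OF irho, of B] by simp
    have bd: "\<bar>(f x - poly p x) * \<rho> x\<bar> \<le> B * \<rho> x" if "x \<in> {0..a}" for x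
      using p(2) that rho_nn[of x] by (simp add: abs_mult f_def mult_right_mono)
    have "integral {0..a} (\<lambda>x. (f x - poly p x) * \<rho> x) \<le> integral {0..a} (\<lambda>x. B * \<rho> x)"
      using bd by (intro integral_le[OF i3 i4]) (auto simp: abs_le_iff)
    moreover have "- integral {0..a} (\<lambda>x. (f x - poly p x) * \<rho> x) \<le> integral {0..a} (\<lambda>x. B * \<rho> x)"
    proof -
      have "integral {0..a} (\<lambda>x. - ((f x - poly p x) * \<rho> x)) \<le> integral {0..a} (\<lambda>x. B * \<rho> x)"
        using bd by (intro integral_le[OF integrable_neg[OF i3] i4]) (auto simp: abs_le_iff)
      then show ?thesis by (simp add: integral_neg)
    qed
    moreover have "integral {0..a} (\<lambda>x. B * \<rho> x) = B * J" by (simp add: J_def)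
    ultimately show ?thesis by linarith
  qed
  have e2: "\<bar>\<Sum>k = 1..n. w k * (f (s k) - poly p (s k))\<bar> \<le> B * J"
  proof -
    have "\<bar>\<Sum>k = 1..n. w k * (f (s k) - poly p (s k))\<bar> \<le> (\<Sum>k = 1..n. \<bar>w k * (f (s k) - poly p (s k))\<bar>)"
      by (rule sum_abs)
    also have "\<dots> \<le> (\<Sum>k = 1..n. w k * B)"
    proof (rule sum_mono)
      fix k assume "k \<in> {1..n}"
      then have "s k \<in> {0..a}" "w k > 0" using sk by auto
      then show "\<bar>w k * (f (s k) - poly p (s k))\<bar> \<le> w k * B"
        using p(2) by (simp add: abs_mult f_def mult_left_mono)
    qed
    also have "\<dots> = B * J" using sw by (simp add: sum_distrib_left[symmetric] mult.commute)
    finally show ?thesis .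
  qed
  have J: "J \<le> a powr \<beta>"
  proof -
    have "J \<le> integral {0..a} (\<lambda>x. a powr (\<beta> - 1))"
      unfolding J_def using irho b
      by (intro integral_le) (auto simp: \<rho>_def intro!: powr_mono2)
    also have "\<dots> = a * a powr (\<beta> - 1)" using a by simp
    also have "\<dots> = a powr \<beta>" using a by (simp add: powr_diff)
    finally show ?thesis .
  qed
  have Bnn: "0 \<le> B" using a assms(7) by (simp add: B_def)
  have err: "\<bar>integral {0..a} (\<lambda>x. f x * \<rho> x) - (\<Sum>k = 1..n. w k * f (s k))\<bar> \<le> 4 * a powr \<beta> * (a * t / 4) ^ (2 * n) / fact (2 * n)"
  proof -
    have "\<bar>integral {0..a} (\<lambda>x. f x * \<rho> x) - (\<Sum>k = 1..n. w k * f (s k))\<bar> \<le> 2 * (B * J)"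
      using split e1 e2 by linarith
    also have "\<dots> \<le> 2 * (B * a powr \<beta>)" using J Bnn by (simp add: mult_left_mono)
    also have "\<dots> = 4 * a powr \<beta> * (a * t / 4) ^ (2 * n) / fact (2 * n)" by (simp add: B_def)
    finally show ?thesis .
  qed
  have sw2: "(\<Sum>k = 1..n. w k * exp (- s k * t)) = (\<Sum>k = 1..n. w k * f (s k))"
    by (simp add: f_def mult.commute)
  show ?thesis unfolding sw2
    using numeric[OF a assms(2) assms(7) assms(8) assms(5) err] by (simp add: f_def \<rho>_def)
qed

end
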